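(* Let $0<p<\infty$ and $D>0$, and let $\Phi:[0,\infty)\to[0,\infty)$ be such that $t\mapsto\Phi(t^{1/p})$ is a Young function satisfying the $\nabla_2$-condition. Then there does not exist any continuous map $\tau:\mathbb{R}\to\mathbb{R}$ such that \[ |\tau^{-1}(E)|\le\left\{\Phi\left(\frac{1}{D|E|^{1/p}}\right)\right\}^{-1} \] holds for all Lebesgue measurable sets $E\subset\mathbb{R}$.
   Context: $|\cdot|$ denotes Lebesgue measure on $\mathbb{R}$. A Young function is a map $\Psi:[0,\infty)\to[0,\infty)$ that is positive on $(0,\infty)$, convex, with $\lim_{t\downarrow0}\Psi(t)=\Psi(0)=0$. A Young function $\Psi$ satisfies the $\nabla_2$-condition if there is a constant $k>1$ with $\Psi(t)\le\frac{1}{2k}\Psi(kt)$ for all $t>0$. Conventions $1/0=\infty$, $\Phi(\infty)=\infty$, $1/\infty=0$ are used when $|E|\in\{0,\infty\}$. *)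

theory Defs
  imports "HOL-Analysis.Analysis"
begin

definition young_function :: "(real \<Rightarrow> real) \<Rightarrow> bool" where
  "young_function \<Psi> \<longleftrightarrow>
     (\<forall>t>0. \<Psi> t > 0) \<and> convex_on {0..} \<Psi> \<and> \<Psi> 0 = 0 \<and> (\<Psi> \<longlongrightarrow> 0) (at_right 0)"

definition nabla2 :: "(real \<Rightarrow> real) \<Rightarrow> bool" where
  "nabla2 \<Psi> \<longleftrightarrow> (\<exists>k>1. \<forall>t>0. \<Psi> t \<le> 1 / (2 * k) * \<Psi> (k * t))"

text \<open>The bound  {\<Phi>(1/(D m^(1/p)))}^(-1)  for m = |E|, with the conventions
  1/0 = \<infinity>, \<Phi>(\<infinity>) = \<infinity>, 1/\<infinity> = 0: it is 0 if m = 0 and \<infinity> if m = \<infinity>.\<close>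
definition orlicz_bound :: "(real \<Rightarrow> real) \<Rightarrow> real \<Rightarrow> real \<Rightarrow> ennreal \<Rightarrow> ennreal" where
  "orlicz_bound \<Phi> p D m =
     (if m = 0 then 0
      else if m = \<infinity> then \<infinity>
      else ennreal (1 / \<Phi> (1 / (D * enn2real m powr (1 / p)))))"

end

theory Submission
  imports Defs
begin

lemma nabla_iter:
  fixes \<Psi> :: "real \<Rightarrow> real"
  assumes "k > 1" "\<forall>t>0. \<Psi> t \<le> 1 / (2 * k) * \<Psi> (k * t)" "a > 0"
  shows "(2*k)^j * \<Psi> a \<le> \<Psi> (k^j * a)"
proof (induction j)
  case 0 then show ?case by simp
next
  case (Suc j)
  have pos: "k^j * a > 0" using assms by simp
  have "(2*k)^Suc j * \<Psi> a = (2*k) * ((2*k)^j * \<Psi> a)" by simp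
  also have "\<dots> \<le> (2*k) * \<Psi> (k^j * a)" using Suc assms(1) by simp
  also have "\<dots> \<le> \<Psi> (k * (k^j * a))" using assms(2) pos assms(1)
    by (auto simp: field_simps)
  finally show ?case by (simp add: mult.assoc)
qed

lemma cover_bound:
  fixes U :: "real set" and A :: "nat \<Rightarrow> real set"
  assumes "U \<in> sets lebesgue" "\<And>i. A i \<in> sets lebesgue" "U \<subseteq> (\<Union>i<n. A i)"
    "\<And>i. emeasure lebesgue (A i) \<le> ennreal B" "B \<ge> 0"
  shows "emeasure lebesgue U \<le> ennreal (real n * B)"
proof -
  have "emeasure lebesgue U \<le> emeasure lebesgue (\<Union>i<n. A i)"
    using assms by (intro emeasure_mono) auto
  also have "\<dots> \<le> (\<Sum>i<n. emeasure lebesgue (A i))"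
    using assms by (intro emeasure_subadditive_finite) auto
  also have "\<dots> \<le> (\<Sum>i<n. ennreal B)" using assms by (intro sum_mono) auto
  also have "\<dots> = ennreal (real n * B)" using assms by (simp add: ennreal_mult ennreal_of_nat_eq_real_of_nat)
  finally show ?thesis .
qed

theorem proposition5p2:
  fixes p D :: real and \<Phi> :: "real \<Rightarrow> real"
  assumes "0 < p" and "0 < D"
    and "\<forall>t\<ge>0. \<Phi> t \<ge> 0"
    and "young_function (\<lambda>t. \<Phi> (t powr (1 / p)))"
    and "nabla2 (\<lambda>t. \<Phi> (t powr (1 / p)))"
  shows "\<not> (\<exists>\<tau> :: real \<Rightarrow> real. continuous_on UNIV \<tau> \<and>
            (\<forall>E \<in> sets lebesgue. \<tau> -` E \<in> sets lebesgue \<longrightarrow>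
               emeasure lebesgue (\<tau> -` E) \<le> orlicz_bound \<Phi> p D (emeasure lebesgue E)))"
proof
  assume "\<exists>\<tau> :: real \<Rightarrow> real. continuous_on UNIV \<tau> \<and>
            (\<forall>E \<in> sets lebesgue. \<tau> -` E \<in> sets lebesgue \<longrightarrow>
               emeasure lebesgue (\<tau> -` E) \<le> orlicz_bound \<Phi> p D (emeasure lebesgue E))"
  then obtain \<tau> :: "real \<Rightarrow> real" where cont: "continuous_on UNIV \<tau>" and
    bnd: "\<And>E. E \<in> sets lebesgue \<Longrightarrow> \<tau> -` E \<in> sets lebesgue \<Longrightarrow>
               emeasure lebesgue (\<tau> -` E) \<le> orlicz_bound \<Phi> p D (emeasure lebesgue E)"
    by blast
  define \<Psi> where "\<Psi> = (\<lambda>t. \<Phi> (t powr (1/p)))"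
  obtain k where k: "k > 1" "\<forall>t>0. \<Psi> t \<le> 1 / (2 * k) * \<Psi> (k * t)"
    using assms(5) unfolding nabla2_def \<Psi>_def by blast
  have \<Psi>pos: "\<And>t. t > 0 \<Longrightarrow> \<Psi> t > 0"
    using assms(4) unfolding young_function_def \<Psi>_def by blast
  have contat: "\<And>x. continuous (at x) \<tau>"
    using cont by (simp add: continuous_on_eq_continuous_at)
  have meas_closed: "\<And>S. closed S \<Longrightarrow> \<tau> -` S \<in> sets lebesgue"
    using continuous_closed_vimage[OF _ contat] by simp
  have "\<exists>x. \<tau> x \<noteq> \<tau> 0"
  proof (rule ccontr)
    assume "\<not> ?thesis"
    then have eq: "\<tau> -` {\<tau> 0} = UNIV" by auto
    have "emeasure lebesgue (\<tau> -` {\<tau> 0}) \<le> orlicz_bound \<Phi> p D (emeasure lebesgue {\<tau> 0})"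
      by (rule bnd) (auto intro: meas_closed)
    then show False using eq by (simp add: orlicz_bound_def)
  qed
  then obtain x0 where x0: "\<tau> x0 \<noteq> \<tau> 0" by blast
  define c where "c = min (\<tau> x0) (\<tau> 0)"
  define d where "d = max (\<tau> x0) (\<tau> 0)"
  have cd: "c < d" using x0 unfolding c_def d_def by auto
  have conn: "connected (range \<tau>)"
    using connected_continuous_image[OF cont] by simp
  have "{c..d} \<subseteq> range \<tau>"
    by (rule connected_contains_Icc[OF conn]) (auto simp: c_def d_def min_def max_def)
  moreover have "(c+d)/2 \<in> {c..d}" using cd by simp
  ultimately obtain u where u: "\<tau> u = (c+d)/2" by (metis imageE subsetD)
  define U where "U = \<tau> -` {c<..<d}"
  have Uopen: "open U" unfolding U_def
    by (rule continuous_imp_open_vimage[OF cont]) auto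
  have uU: "u \<in> U" using u cd unfolding U_def by auto
  obtain e where e: "e > 0" "ball u e \<subseteq> U" using Uopen uU open_contains_ball by blast
  have Umeas: "U \<in> sets lebesgue" using Uopen by simp
  have sub: "{u - e/2 .. u + e/2} \<subseteq> U"
  proof
    fix t assume "t \<in> {u - e/2 .. u + e/2}"
    then have "\<bar>u - t\<bar> < e" using e(1) by auto
    then show "t \<in> U" using e(2) by (auto simp: dist_real_def subset_iff)
  qed
  have elow: "ennreal e \<le> emeasure lebesgue U"
  proof -
    have "emeasure lebesgue {u - e/2 .. u + e/2} \<le> emeasure lebesgue U"
      using sub Umeas by (intro emeasure_mono) auto
    then show ?thesis using e by simp
  qed
  define a where "a = 1 / (D powr p * (d - c))"
  have apos: "a > 0" using cd assms by (simp add: a_def)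
  have \<Psi>a: "\<Psi> a > 0" using \<Psi>pos apos by simp
  have upper: "emeasure lebesgue U \<le> ennreal (2 / (2^j * \<Psi> a))" for j :: nat
  proof -
    define N where "N = k^j"
    have N1: "N \<ge> 1" using k by (simp add: N_def)
    define h where "h = (d - c) / N"
    have hpos: "h > 0" using cd N1 by (simp add: h_def)
    define n where "n = nat \<lceil>N\<rceil>"
    define I where "I = (\<lambda>i::nat. {c + real i * h .. c + real (Suc i) * h})"
    have cover: "U \<subseteq> (\<Union>i<n. \<tau> -` I i)"
    proof
      fix y assume "y \<in> U"
      then have y: "c < \<tau> y" "\<tau> y < d" by (auto simp: U_def)
      define q where "q = (\<tau> y - c) / h"
      have q0: "q \<ge> 0" using y hpos by (simp add: q_def)
      have qN: "q < N" using y hpos N1 by (simp add: q_def h_def divide_simps)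
      define i where "i = nat \<lfloor>q\<rfloor>"
      have ri: "real i = of_int \<lfloor>q\<rfloor>" using q0 by (simp add: i_def)
      have i1: "real i \<le> q" "q < real i + 1" using ri by linarith+
      have rn: "real n = of_int \<lceil>N\<rceil>" using N1 unfolding n_def by simp
      have "N \<le> of_int \<lceil>N\<rceil>" by (rule le_of_int_ceiling)
      then have "real i < real n" using rn i1(1) qN by linarith
      then have "i < n" by simp
      moreover have "\<tau> y \<in> I i"
      proof -
        have "real i * h \<le> \<tau> y - c" using i1(1) hpos by (simp add: q_def field_simps)
        moreover have "\<tau> y - c \<le> (real i + 1) * h" using i1(2) hpos by (simp add: q_def field_simps)
        ultimately show ?thesis by (simp add: I_def algebra_simps)
      qed
      ultimately show "y \<in> (\<Union>i<n. \<tau> -` I i)" by auto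
    qed
    have key: "(N * a) powr (1/p) = 1 / (D * h powr (1/p))"
    proof -
      have "N * a = 1 / (D powr p * h)" using N1 cd by (simp add: a_def h_def field_simps)
      then have "(N * a) powr (1/p) = 1 / ((D powr p) powr (1/p) * h powr (1/p))"
        using assms hpos by (simp add: powr_divide powr_mult)
      also have "(D powr p) powr (1/p) = D" using assms by (simp add: powr_powr)
      finally show ?thesis .
    qed
    have each: "emeasure lebesgue (\<tau> -` I i) \<le> ennreal (1 / \<Psi> (N * a))" for i
    proof -
      have "emeasure lebesgue (I i) = ennreal h" using hpos by (simp add: I_def algebra_simps)
      moreover have "emeasure lebesgue (\<tau> -` I i) \<le> orlicz_bound \<Phi> p D (emeasure lebesgue (I i))"
        by (rule bnd) (auto simp: I_def intro: meas_closed)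
      ultimately show ?thesis using hpos key
        by (simp add: orlicz_bound_def \<Psi>_def)
    qed
    have "emeasure lebesgue U \<le> ennreal (real n * (1 / \<Psi> (N * a)))"
      by (rule cover_bound[OF Umeas _ cover each]) (use meas_closed \<Psi>pos apos N1 in \<open>auto simp: I_def intro!: less_imp_le\<close>)
    also have "real n * (1 / \<Psi> (N * a)) \<le> 2 / (2^j * \<Psi> a)"
    proof -
      have it: "(2*k)^j * \<Psi> a \<le> \<Psi> (N * a)" using nabla_iter[OF k apos] by (simp add: N_def)
      have pN: "\<Psi> (N * a) > 0" using \<Psi>pos apos N1 by simp
      have rn: "real n \<le> 2 * N" using N1 unfolding n_def by linarith
      have "real n * (1 / \<Psi> (N * a)) \<le> 2 * N / \<Psi> (N * a)" using rn pN
        by (simp add: divide_right_mono)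
      also have "\<dots> \<le> 2 * N / ((2*k)^j * \<Psi> a)"
      proof (rule divide_left_mono)
        show "0 < \<Psi> (N * a) * ((2 * k) ^ j * \<Psi> a)" using pN \<Psi>a k by simp
      qed (use it N1 in auto)
      also have "\<dots> = 2 / (2^j * \<Psi> a)" using k \<Psi>a by (simp add: N_def power_mult_distrib)
      finally show ?thesis .
    qed
    then have "ennreal (real n * (1 / \<Psi> (N * a))) \<le> ennreal (2 / (2^j * \<Psi> a))"
      by (rule ennreal_leI)
    finally show ?thesis .
  qed
  obtain j :: nat where j: "2 / (e * \<Psi> a) < 2^j" using real_arch_pow[of 2 "2 / (e * \<Psi> a)"] by auto
  have "ennreal e \<le> ennreal (2 / (2^j * \<Psi> a))" using elow upper[of j] by simp
  then have "e \<le> 2 / (2^j * \<Psi> a)" using \<Psi>a by (simp add: ennreal_le_iff)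
  then have "e * (2^j * \<Psi> a) \<le> 2" using \<Psi>a by (simp add: field_simps)
  moreover have "2 < e * \<Psi> a * 2^j" using j e \<Psi>a by (simp add: field_simps)
  ultimately show False by (simp add: algebra_simps)
qed

end
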